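(* Let $G$ be a group with subgroups $H,J$ such that $H\neq G$, $|J:H\cap J|=2$, $|H:H\cap J|$ is finite and $H\cap J$ is core-free in $G$, and let $\Gamma=\mathrm{Cos}(G,H,J)$. Let $g\in J\setminus(H\cap J)$ and $L=(H\cap H^g)\langle g\rangle$. Then $J\le L$, $\Gamma$ has constant edge-multiplicity $|L:J|$, and the base graph of $\Gamma$ is isomorphic to $\mathrm{Cos}(G,H,L)$, which is isomorphic to $\mathrm{SimpCos}(G,H,HgH)$. In particular $\Gamma$ is simple if and only if $J=(H\cap H^g)\langle g\rangle$, and in that case $\Gamma\cong\mathrm{SimpCos}(G,H,HgH)$.
   Context: A graph is a triple $(V,E,\mathbf I)$ with $\mathbf I\subseteq V\times E$ such that every edge is incident with exactly two distinct vertices (multiple edges allowed, no loops). It has edge-multiplicity $\lambda$ if every pair of adjacent vertices is incident with exactly $\lambda$ common edges; it is simple if $\lambda=1$. The base graph of a graph with constant edge-multiplicity is the simple graph on the same vertex set whose edges are the unordered pairs of adjacent vertices. Coset graph: for a group $G$ and subgroups $H,J$ with $H\ne G$, $|J:H\cap J|=2$, $|H:H\cap J|$ finite, $\mathrm{Cos}(G,H,J)$ has vertex set $\{Hx:x\in G\}$, edge set $\{Jy:y\in G\}$, and $Hx$ incident with $Jy$ iff $yx^{-1}\in JH$. $\mathrm{SimpCos}(G,H,HgH)$ is the simple graph with vertex set $\{Hx:x\in G\}$ in which $\{Hx,Hy\}$ is an edge iff $yx^{-1}\in HgH$. *)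

theory Defs
  imports "HOL-Algebra.Coset" "HOL-Algebra.Generated_Groups"
begin

text \<open>A (multi)graph is represented as a triple (V, E, I) with I a subset of V x E.\<close>

type_synonym ('v, 'e) inc_graph = "'v set \<times> 'e set \<times> ('v \<times> 'e) set"

definition gverts :: "('v, 'e) inc_graph \<Rightarrow> 'v set" where
  "gverts \<Gamma> = fst \<Gamma>"

definition gedges :: "('v, 'e) inc_graph \<Rightarrow> 'e set" where
  "gedges \<Gamma> = fst (snd \<Gamma>)"

definition ginc :: "('v, 'e) inc_graph \<Rightarrow> ('v \<times> 'e) set" where
  "ginc \<Gamma> = snd (snd \<Gamma>)"

definition gadjacent :: "('v, 'e) inc_graph \<Rightarrow> 'v \<Rightarrow> 'v \<Rightarrow> bool" where
  "gadjacent \<Gamma> u v \<longleftrightarrow> u \<in> gverts \<Gamma> \<and> v \<in> gverts \<Gamma> \<and> u \<noteq> v \<and>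
     (\<exists>e\<in>gedges \<Gamma>. (u, e) \<in> ginc \<Gamma> \<and> (v, e) \<in> ginc \<Gamma>)"

definition edge_multiplicity :: "('v, 'e) inc_graph \<Rightarrow> nat \<Rightarrow> bool" where
  "edge_multiplicity \<Gamma> m \<longleftrightarrow>
     (\<forall>u v. gadjacent \<Gamma> u v \<longrightarrow>
        card {e \<in> gedges \<Gamma>. (u, e) \<in> ginc \<Gamma> \<and> (v, e) \<in> ginc \<Gamma>} = m)"

definition simple_graph :: "('v, 'e) inc_graph \<Rightarrow> bool" where
  "simple_graph \<Gamma> \<longleftrightarrow> edge_multiplicity \<Gamma> 1"

definition base_graph :: "('v, 'e) inc_graph \<Rightarrow> ('v, 'v set) inc_graph" where
  "base_graph \<Gamma> =
     (let E = {{u, v} | u v. gadjacent \<Gamma> u v}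
      in (gverts \<Gamma>, E, {(x, e). x \<in> gverts \<Gamma> \<and> e \<in> E \<and> x \<in> e}))"

definition graph_iso :: "('v, 'e) inc_graph \<Rightarrow> ('w, 'f) inc_graph \<Rightarrow> bool" where
  "graph_iso \<Gamma> \<Delta> \<longleftrightarrow>
     (\<exists>\<phi> \<psi>. bij_betw \<phi> (gverts \<Gamma>) (gverts \<Delta>) \<and> bij_betw \<psi> (gedges \<Gamma>) (gedges \<Delta>) \<and>
        (\<forall>v\<in>gverts \<Gamma>. \<forall>e\<in>gedges \<Gamma>. (v, e) \<in> ginc \<Gamma> \<longleftrightarrow> (\<phi> v, \<psi> e) \<in> ginc \<Delta>))"

definition coset_graph ::
  "('a, 'b) monoid_scheme \<Rightarrow> 'a set \<Rightarrow> 'a set \<Rightarrow> ('a set, 'a set) inc_graph" where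
  "coset_graph G H J =
     (rcosets\<^bsub>G\<^esub> H, rcosets\<^bsub>G\<^esub> J,
      {(A, B). \<exists>x\<in>carrier G. \<exists>y\<in>carrier G.
          A = H #>\<^bsub>G\<^esub> x \<and> B = J #>\<^bsub>G\<^esub> y \<and> y \<otimes>\<^bsub>G\<^esub> inv\<^bsub>G\<^esub> x \<in> J <#>\<^bsub>G\<^esub> H})"

definition simp_coset_graph ::
  "('a, 'b) monoid_scheme \<Rightarrow> 'a set \<Rightarrow> 'a set \<Rightarrow> ('a set, 'a set set) inc_graph" where
  "simp_coset_graph G H D =
     (let E = {{H #>\<^bsub>G\<^esub> x, H #>\<^bsub>G\<^esub> y} | x y.
                 x \<in> carrier G \<and> y \<in> carrier G \<and> y \<otimes>\<^bsub>G\<^esub> inv\<^bsub>G\<^esub> x \<in> D}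
      in (rcosets\<^bsub>G\<^esub> H, E, {(A, e). A \<in> rcosets\<^bsub>G\<^esub> H \<and> e \<in> E \<and> A \<in> e}))"

definition conj_set :: "('a, 'b) monoid_scheme \<Rightarrow> 'a set \<Rightarrow> 'a \<Rightarrow> 'a set" where
  "conj_set G K g = (inv\<^bsub>G\<^esub> g <#\<^bsub>G\<^esub> K) #>\<^bsub>G\<^esub> g"

definition core_free :: "('a, 'b) monoid_scheme \<Rightarrow> 'a set \<Rightarrow> bool" where
  "core_free G K \<longleftrightarrow> (\<Inter>x\<in>carrier G. conj_set G K x) = {\<one>\<^bsub>G\<^esub>}"

text \<open>Index |A : K| for K a subgroup of A (as a natural number; finiteness stated separately).\<close>
definition sindex :: "('a, 'b) monoid_scheme \<Rightarrow> 'a set \<Rightarrow> 'a set \<Rightarrow> nat" where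
  "sindex G A K = card (rcosets\<^bsub>G\<lparr>carrier := A\<rparr>\<^esub> K)"

end

theory Submission
  imports Defs
begin
lemma rcosets_sub: "rcosets\<^bsub>G\<lparr>carrier := X\<rparr>\<^esub> K = {K #>\<^bsub>G\<^esub> z | z. z \<in> X}"
  unfolding RCOSETS_def r_coset_def by auto

lemma (in group) rcos_eq:
  assumes "subgroup M G" "x \<in> carrier G" "y \<in> carrier G"
  shows "(M #> x = M #> y) \<longleftrightarrow> x \<otimes> inv y \<in> M"
proof
  assume a: "M #> x = M #> y"
  have "x \<in> M #> y" using rcos_self[OF assms(2) assms(1)] unfolding a .
  thus "x \<otimes> inv y \<in> M" using subgroup.rcos_module[OF assms(1) is_group assms(3) assms(2)] by simp
next
  assume "x \<otimes> inv y \<in> M"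
  hence "x \<in> M #> y" using subgroup.rcos_module[OF assms(1) is_group assms(3) assms(2)] by simp
  from repr_independence[OF this assms(3) assms(1)] show "M #> x = M #> y" by (rule sym)
qed

lemma (in group) cancelL1 [simp]: "x \<in> carrier G \<Longrightarrow> y \<in> carrier G \<Longrightarrow> x \<otimes> (inv x \<otimes> y) = y"
  by (simp add: m_assoc[symmetric])
lemma (in group) cancelL2 [simp]: "x \<in> carrier G \<Longrightarrow> y \<in> carrier G \<Longrightarrow> inv x \<otimes> (x \<otimes> y) = y"
  by (simp add: m_assoc[symmetric])

lemma graph_iso_sym:
  assumes "graph_iso A B" shows "graph_iso B A"
proof -
  obtain f h where f: "bij_betw f (gverts A) (gverts B)" and h: "bij_betw h (gedges A) (gedges B)"
    and i: "\<forall>v\<in>gverts A. \<forall>e\<in>gedges A. (v, e) \<in> ginc A \<longleftrightarrow> (f v, h e) \<in> ginc B"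
    using assms unfolding graph_iso_def by blast
  let ?f = "inv_into (gverts A) f" and ?h = "inv_into (gedges A) h"
  have "bij_betw ?f (gverts B) (gverts A)" by (rule bij_betw_inv_into[OF f])
  moreover have "bij_betw ?h (gedges B) (gedges A)" by (rule bij_betw_inv_into[OF h])
  moreover have "\<forall>v\<in>gverts B. \<forall>e\<in>gedges B. (v, e) \<in> ginc B \<longleftrightarrow> (?f v, ?h e) \<in> ginc A"
  proof (intro ballI)
    fix v e assume v: "v \<in> gverts B" and e: "e \<in> gedges B"
    have fv: "?f v \<in> gverts A" "f (?f v) = v"
      using v f by (auto simp: bij_betw_def inv_into_into f_inv_into_f)
    have he: "?h e \<in> gedges A" "h (?h e) = e"
      using e h by (auto simp: bij_betw_def inv_into_into f_inv_into_f)
    show "(v, e) \<in> ginc B \<longleftrightarrow> (?f v, ?h e) \<in> ginc A" using i fv he by metis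
  qed
  ultimately show ?thesis unfolding graph_iso_def by blast
qed

locale setting = group G for G (structure) +
  fixes H J g
  assumes H: "subgroup H G" and J: "subgroup J G"
    and idx: "sindex G J (H \<inter> J) = 2" and gJ: "g \<in> J" and gnH: "g \<notin> H"
begin
lemma gc: "g \<in> carrier G" by (rule subgroup.mem_carrier[OF J gJ])
lemma HG: "H \<subseteq> carrier G" by (rule subgroup.subset[OF H])
lemma JG: "J \<subseteq> carrier G" by (rule subgroup.subset[OF J])
lemma K: "subgroup (H \<inter> J) G" by (rule subgroups_Inter_pair[OF H J])

lemma JK: "J \<subseteq> (H \<inter> J) \<union> ((H \<inter> J) #> g)"
proof -
  let ?K = "H \<inter> J"
  let ?S = "{?K #> z | z. z \<in> J}"
  have c: "card ?S = 2" using idx by (simp only: sindex_def rcosets_sub)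
  have KG: "?K \<subseteq> carrier G" using HG by (rule subset_trans[rotated]) (rule Int_lower1)
  have e: "?K #> \<one> = ?K" using KG by (rule coset_mult_one)
  have "\<exists>z. ?K = ?K #> z \<and> z \<in> J" using e subgroup.one_closed[OF J] by metis
  hence k1: "?K \<in> ?S" by (simp only: mem_Collect_eq)
  have "\<exists>z. ?K #> g = ?K #> z \<and> z \<in> J" using gJ by metis
  hence k2: "?K #> g \<in> ?S" by (simp only: mem_Collect_eq)
  have ne: "?K \<noteq> ?K #> g"
  proof
    assume a: "?K = ?K #> g"
    have "g \<in> ?K" using rcos_self[OF gc K] unfolding a[symmetric] .
    thus False using gnH by simp
  qed
  have fin: "finite ?S" by (rule card_ge_0_finite) (simp only: c zero_less_numeral)
  have sub: "{?K, ?K #> g} \<subseteq> ?S" using k1 k2 by (simp only: insert_subset empty_subsetI simp_thms)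
  have c2: "card {?K, ?K #> g} = 2" using ne by simp
  have S: "{?K, ?K #> g} = ?S" using card_subset_eq[OF fin sub] c c2 by simp
  show ?thesis
  proof
    fix j assume j: "j \<in> J"
    hence jc: "j \<in> carrier G" using JG by (rule rev_subsetD)
    have "\<exists>z. ?K #> j = ?K #> z \<and> z \<in> J" using j by metis
    hence "?K #> j \<in> ?S" by (simp only: mem_Collect_eq)
    hence o: "?K #> j = ?K \<or> ?K #> j = ?K #> g" unfolding S[symmetric] by simp
    have m: "j \<in> ?K #> j" using rcos_self[OF jc K] .
    show "j \<in> ?K \<union> (?K #> g)"
    proof (cases "?K #> j = ?K")
      case True thus ?thesis using m by simp
    next
      case False hence "?K #> j = ?K #> g" using o by simp
      thus ?thesis using m by simp
    qed
  qed
qed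

lemma KH: "H \<inter> J \<subseteq> H" by (rule Int_lower1)

lemma g2: "g \<otimes> g \<in> H"
proof -
  let ?K = "H \<inter> J"
  have ig: "inv g \<in> J" by (rule subgroup.m_inv_closed[OF J gJ])
  have "inv g \<notin> ?K"
  proof
    assume "inv g \<in> ?K"
    hence "inv (inv g) \<in> ?K" by (rule subgroup.m_inv_closed[OF K])
    thus False using gnH gc by simp
  qed
  hence "inv g \<in> ?K #> g" using JK ig by auto
  hence "inv g \<otimes> inv g \<in> ?K" using subgroup.rcos_module_imp[OF K is_group gc] by simp
  hence "inv (inv g \<otimes> inv g) \<in> ?K" by (rule subgroup.m_inv_closed[OF K])
  hence "g \<otimes> g \<in> ?K" using gc by (simp add: inv_mult_group)
  thus ?thesis by simp
qed

lemma Hg_inv: "H #> inv g = H #> g"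
proof -
  have "inv g \<otimes> inv g \<in> H"
  proof -
    have "inv (g \<otimes> g) \<in> H" by (rule subgroup.m_inv_closed[OF H g2])
    thus ?thesis using gc by (simp add: inv_mult_group)
  qed
  thus ?thesis using rcos_eq[OF H inv_closed[OF gc] gc] by simp
qed

definition ends :: "'a \<Rightarrow> 'a set set" where
  "ends y = {H #> y, H #> (g \<otimes> y)}"

definition Stab :: "'a set" where
  "Stab = {z \<in> carrier G. ends z = ends \<one>}"

lemma ends_one: "ends \<one> = {H, H #> g}"
  unfolding ends_def using HG gc by simp

lemma ends_mult:
  assumes "a \<in> carrier G" "b \<in> carrier G"
  shows "ends (a \<otimes> b) = (\<lambda>A. A #> b) ` ends a"
proof -
  have "H #> (a \<otimes> b) = (H #> a) #> b" using coset_mult_assoc[OF HG assms] by simp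
  moreover have "H #> (g \<otimes> (a \<otimes> b)) = (H #> (g \<otimes> a)) #> b"
    using coset_mult_assoc[OF HG m_closed[OF gc assms(1)] assms(2)] gc assms by (simp add: m_assoc)
  ultimately show ?thesis unfolding ends_def by simp
qed

lemma ends_congr:
  assumes "a \<in> carrier G" "a' \<in> carrier G" "b \<in> carrier G" "ends a = ends a'"
  shows "ends (a \<otimes> b) = ends (a' \<otimes> b)"
  using ends_mult[OF assms(1,3)] ends_mult[OF assms(2,3)] assms(4) by simp

lemma ends_sub: "y \<in> carrier G \<Longrightarrow> ends y \<subseteq> rcosets H"
  unfolding ends_def using rcosetsI[OF HG] gc by simp

lemma ends_ne: "y \<in> carrier G \<Longrightarrow> H #> y \<noteq> H #> (g \<otimes> y)"
proof
  assume y: "y \<in> carrier G" and e: "H #> y = H #> (g \<otimes> y)"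
  hence "y \<otimes> inv (g \<otimes> y) \<in> H" using rcos_eq[OF H y m_closed[OF gc y]] by simp
  hence "inv (y \<otimes> inv (g \<otimes> y)) \<in> H" by (rule subgroup.m_inv_closed[OF H])
  moreover have "inv (y \<otimes> inv (g \<otimes> y)) = g" using y gc by (simp add: inv_mult_group m_assoc)
  ultimately show False using gnH by simp
qed

lemma Stab_sub: "Stab \<subseteq> carrier G" unfolding Stab_def by (rule subsetI) simp

lemma Stab_subgroup: "subgroup Stab G"
proof (rule subgroupI)
  show "Stab \<subseteq> carrier G" by (rule Stab_sub)
  show "Stab \<noteq> {}" unfolding Stab_def by auto
next
  fix a assume a: "a \<in> Stab"
  hence ac: "a \<in> carrier G" and e: "ends a = ends \<one>" unfolding Stab_def by auto
  have "ends (a \<otimes> inv a) = ends (\<one> \<otimes> inv a)" by (rule ends_congr[OF ac one_closed inv_closed[OF ac] e])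
  thus "inv a \<in> Stab" unfolding Stab_def using ac by simp
next
  fix a b assume a: "a \<in> Stab" and b: "b \<in> Stab"
  hence ac: "a \<in> carrier G" and e: "ends a = ends \<one>" and bc: "b \<in> carrier G" and eb: "ends b = ends \<one>"
    unfolding Stab_def by auto
  have "ends (a \<otimes> b) = ends (\<one> \<otimes> b)" by (rule ends_congr[OF ac one_closed bc e])
  thus "a \<otimes> b \<in> Stab" unfolding Stab_def using ac bc eb by simp
qed

lemma ends_eq:
  assumes y: "y \<in> carrier G" and y': "y' \<in> carrier G"
  shows "ends y' = ends y \<longleftrightarrow> y' \<otimes> inv y \<in> Stab"
proof
  assume e: "ends y' = ends y"
  have "ends (y' \<otimes> inv y) = ends (y \<otimes> inv y)" by (rule ends_congr[OF y' y inv_closed[OF y] e])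
  thus "y' \<otimes> inv y \<in> Stab" unfolding Stab_def using y y' by simp
next
  assume "y' \<otimes> inv y \<in> Stab"
  hence e: "ends (y' \<otimes> inv y) = ends \<one>" unfolding Stab_def by simp
  have "ends ((y' \<otimes> inv y) \<otimes> y) = ends (\<one> \<otimes> y)" by (rule ends_congr[OF _ one_closed y e]) (simp add: y y')
  thus "ends y' = ends y" using y y' by (simp add: m_assoc)
qed

lemma g_Stab: "g \<in> Stab"
proof -
  have "H #> (g \<otimes> g) = H" by (rule coset_join2[OF m_closed[OF gc gc] H g2])
  hence "ends g = {H #> g, H}" unfolding ends_def by simp
  thus ?thesis unfolding Stab_def using ends_one gc by auto
qed

lemma K_Stab: "j \<in> H \<inter> J \<Longrightarrow> j \<in> Stab"
proof -
  assume j: "j \<in> H \<inter> J"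
  hence jc: "j \<in> carrier G" using HG by auto
  have e1: "H #> j = H" using coset_join2[OF jc H] j by simp
  have gj: "g \<otimes> j \<in> J" using subgroup.m_closed[OF J gJ] j by simp
  have "g \<otimes> j \<notin> H \<inter> J"
  proof
    assume "g \<otimes> j \<in> H \<inter> J"
    hence "(g \<otimes> j) \<otimes> inv j \<in> H" using subgroup.m_closed[OF H] subgroup.m_inv_closed[OF H] j by simp
    thus False using gnH gc jc by (simp add: m_assoc)
  qed
  hence "g \<otimes> j \<in> (H \<inter> J) #> g" using JK gj by auto
  hence "(g \<otimes> j) \<otimes> inv g \<in> H \<inter> J" using subgroup.rcos_module_imp[OF K is_group gc] by simp
  hence "H #> (g \<otimes> j) = H #> g" using rcos_eq[OF H m_closed[OF gc jc] gc] by simp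
  hence "ends j = ends \<one>" unfolding ends_one unfolding ends_def e1 by simp
  thus ?thesis unfolding Stab_def using jc by simp
qed

lemma J_Stab: "J \<subseteq> Stab"
proof
  fix j assume j: "j \<in> J"
  show "j \<in> Stab"
  proof (cases "j \<in> H \<inter> J")
    case True thus ?thesis by (rule K_Stab)
  next
    case False
    hence "j \<in> (H \<inter> J) #> g" using JK j by auto
    then obtain k where k: "k \<in> H \<inter> J" "j = k \<otimes> g" unfolding r_coset_def by auto
    show ?thesis unfolding k(2) by (rule subgroup.m_closed[OF Stab_subgroup K_Stab[OF k(1)] g_Stab])
  qed
qed

lemma conj_mem:
  assumes x: "x \<in> carrier G"
  shows "x \<in> conj_set G H g \<longleftrightarrow> g \<otimes> x \<otimes> inv g \<in> H"
proof
  assume "x \<in> conj_set G H g"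
  then obtain h where h: "h \<in> H" "x = inv g \<otimes> h \<otimes> g"
    unfolding conj_set_def l_coset_def r_coset_def by auto
  have hc: "h \<in> carrier G" using h HG by auto
  have "g \<otimes> x \<otimes> inv g = h" unfolding h(2) using hc gc by (simp add: m_assoc)
  thus "g \<otimes> x \<otimes> inv g \<in> H" using h by simp
next
  assume a: "g \<otimes> x \<otimes> inv g \<in> H"
  have "x = inv g \<otimes> (g \<otimes> x \<otimes> inv g) \<otimes> g" using x gc by (simp add: m_assoc)
  thus "x \<in> conj_set G H g" using a unfolding conj_set_def l_coset_def r_coset_def by blast
qed

lemma ends_two: "y \<in> carrier G \<Longrightarrow> A \<in> ends y \<Longrightarrow> A = H #> y \<or> A = H #> (g \<otimes> y)"
  unfolding ends_def by simp

lemma L_Stab: "(H \<inter> conj_set G H g) <#> generate G {g} = Stab"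
proof
  have gen: "generate G {g} \<subseteq> Stab" by (rule generate_subgroup_incl) (simp_all add: g_Stab Stab_subgroup)
  have hs: "H \<inter> conj_set G H g \<subseteq> Stab"
  proof
    fix x assume x: "x \<in> H \<inter> conj_set G H g"
    hence xc: "x \<in> carrier G" using HG by auto
    have e1: "H #> x = H" using coset_join2[OF xc H] x by simp
    have c: "g \<otimes> x \<otimes> inv g \<in> H" using conj_mem[OF xc] x by simp
    hence "H #> (g \<otimes> x) = H #> g" using rcos_eq[OF H m_closed[OF gc xc] gc] by simp
    hence "ends x = ends \<one>" unfolding ends_one unfolding ends_def e1 by simp
    thus "x \<in> Stab" unfolding Stab_def using xc by simp
  qed
  show "(H \<inter> conj_set G H g) <#> generate G {g} \<subseteq> Stab"
  proof
    fix z assume "z \<in> (H \<inter> conj_set G H g) <#> generate G {g}"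
    then obtain a b where ab: "a \<in> H \<inter> conj_set G H g" "b \<in> generate G {g}" "z = a \<otimes> b"
      unfolding set_mult_def by auto
    show "z \<in> Stab" unfolding ab(3) using hs gen ab subgroup.m_closed[OF Stab_subgroup] by auto
  qed
  show "Stab \<subseteq> (H \<inter> conj_set G H g) <#> generate G {g}"
  proof
    fix z assume z: "z \<in> Stab"
    hence zc: "z \<in> carrier G" and e: "ends z = {H, H #> g}" unfolding Stab_def ends_one by auto
    have ne: "H #> z \<noteq> H #> (g \<otimes> z)" by (rule ends_ne[OF zc])
    have m1: "H #> z \<in> {H, H #> g}" and m2: "H #> (g \<otimes> z) \<in> {H, H #> g}"
      using e unfolding ends_def by auto
    have gH: "H \<noteq> H #> g" using ends_ne[OF one_closed] HG gc by simp
    show "z \<in> (H \<inter> conj_set G H g) <#> generate G {g}"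
    proof (cases "H #> z = H")
      case True
      hence zH: "z \<in> H" using coset_join1[OF _ zc H] by simp
      have "H #> (g \<otimes> z) = H #> g" using m2 ne True by auto
      hence "g \<otimes> z \<otimes> inv g \<in> H" using rcos_eq[OF H m_closed[OF gc zc] gc] by simp
      hence "z \<in> H \<inter> conj_set G H g" using conj_mem[OF zc] zH by simp
      moreover have "\<one> \<in> generate G {g}" by (rule generate.one)
      moreover have "z = z \<otimes> \<one>" using zc by simp
      ultimately show ?thesis unfolding set_mult_def by blast
    next
      case False
      hence hz: "H #> z = H #> g" using m1 by auto
      hence "H #> (g \<otimes> z) = H" using m2 ne by auto
      hence gzH: "g \<otimes> z \<in> H" using coset_join1[OF _ m_closed[OF gc zc] H] by simp
      have wH: "z \<otimes> inv g \<in> H" using hz rcos_eq[OF H zc gc] by simp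
      have wc: "z \<otimes> inv g \<in> carrier G" using zc gc by simp
      have "g \<otimes> (z \<otimes> inv g) \<otimes> inv g = (g \<otimes> z) \<otimes> inv (g \<otimes> g)"
        using zc gc by (simp add: m_assoc inv_mult_group)
      also have "\<dots> \<in> H" using gzH subgroup.m_inv_closed[OF H g2] subgroup.m_closed[OF H] by simp
      finally have "z \<otimes> inv g \<in> H \<inter> conj_set G H g" using conj_mem[OF wc] wH by simp
      moreover have "g \<in> generate G {g}" by (rule generate.incl) simp
      moreover have "z = (z \<otimes> inv g) \<otimes> g" using zc gc by (simp add: m_assoc)
      ultimately show ?thesis unfolding set_mult_def by blast
    qed
  qed
qed

lemma inc_elem:
  assumes M: "subgroup M G" "g \<in> M" "M \<subseteq> Stab" and x: "x \<in> carrier G" and y: "y \<in> carrier G"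
  shows "y \<otimes> inv x \<in> M <#> H \<longleftrightarrow> H #> x \<in> ends y"
proof
  assume "y \<otimes> inv x \<in> M <#> H"
  then obtain m h where mh: "m \<in> M" "h \<in> H" "y \<otimes> inv x = m \<otimes> h" unfolding set_mult_def by auto
  have mc: "m \<in> carrier G" by (rule subgroup.mem_carrier[OF M(1) mh(1)])
  have hc: "h \<in> carrier G" using mh HG by auto
  have xe: "x = inv h \<otimes> (inv m \<otimes> y)"
  proof -
    have "inv (y \<otimes> inv x) = inv (m \<otimes> h)" using mh by simp
    hence "x \<otimes> inv y = inv h \<otimes> inv m" using x y mc hc by (simp add: inv_mult_group)
    hence "x \<otimes> inv y \<otimes> y = inv h \<otimes> inv m \<otimes> y" by simp
    thus ?thesis using x y mc hc by (simp add: m_assoc)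
  qed
  have "H #> x = H #> (inv m \<otimes> y)"
    using rcos_eq[OF H x m_closed[OF inv_closed[OF mc] y]] unfolding xe using mc hc y
    by (simp add: m_assoc subgroup.m_inv_closed[OF H mh(2)])
  moreover have "inv m \<in> Stab" using subgroup.m_inv_closed[OF M(1) mh(1)] M(3) by auto
  hence "ends (inv m \<otimes> y) = ends (\<one> \<otimes> y)"
    by (intro ends_congr[OF inv_closed[OF mc] one_closed y]) (simp add: Stab_def)
  ultimately show "H #> x \<in> ends y" using y unfolding ends_def by auto
next
  assume "H #> x \<in> ends y"
  hence "H #> x = H #> y \<or> H #> x = H #> (g \<otimes> y)" by (rule ends_two[OF y])
  thus "y \<otimes> inv x \<in> M <#> H"
  proof
    assume "H #> x = H #> y"
    hence "x \<otimes> inv y \<in> H" using rcos_eq[OF H x y] by simp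
    hence "inv (x \<otimes> inv y) \<in> H" by (rule subgroup.m_inv_closed[OF H])
    hence "y \<otimes> inv x \<in> H" using x y by (simp add: inv_mult_group)
    moreover have "y \<otimes> inv x = \<one> \<otimes> (y \<otimes> inv x)" using x y by simp
    moreover have "\<one> \<in> M" by (rule subgroup.one_closed[OF M(1)])
    ultimately show ?thesis unfolding set_mult_def by blast
  next
    assume "H #> x = H #> (g \<otimes> y)"
    hence "x \<otimes> inv (g \<otimes> y) \<in> H" using rcos_eq[OF H x m_closed[OF gc y]] by simp
    hence "inv (x \<otimes> inv (g \<otimes> y)) \<in> H" by (rule subgroup.m_inv_closed[OF H])
    hence "g \<otimes> y \<otimes> inv x \<in> H" using x y gc by (simp add: inv_mult_group)
    moreover have "y \<otimes> inv x = inv g \<otimes> (g \<otimes> y \<otimes> inv x)" using x y gc by (simp add: m_assoc)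
    moreover have "inv g \<in> M" by (rule subgroup.m_inv_closed[OF M(1) M(2)])
    ultimately show ?thesis unfolding set_mult_def by blast
  qed
qed

lemma ends_rcos:
  assumes M: "M \<subseteq> Stab" "subgroup M G" and y: "y \<in> carrier G" and y': "y' \<in> carrier G"
    and e: "M #> y = M #> y'"
  shows "ends y = ends y'"
proof -
  have "y \<otimes> inv y' \<in> M" using rcos_eq[OF M(2) y y'] e by simp
  thus ?thesis using ends_eq[OF y' y] M(1) by auto
qed

lemma inc_graph:
  assumes M: "subgroup M G" "g \<in> M" "M \<subseteq> Stab" and y: "y \<in> carrier G"
  shows "(A, M #> y) \<in> ginc (coset_graph G H M) \<longleftrightarrow> A \<in> ends y"
proof
  assume "(A, M #> y) \<in> ginc (coset_graph G H M)"
  then obtain x y' where xy: "x \<in> carrier G" "y' \<in> carrier G" "A = H #> x" "M #> y = M #> y'"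
     "y' \<otimes> inv x \<in> M <#> H"
    unfolding ginc_def coset_graph_def by auto
  have "A \<in> ends y'" using inc_elem[OF M xy(1,2)] xy by simp
  thus "A \<in> ends y" using ends_rcos[OF M(3,1) y xy(2) xy(4)] by simp
next
  assume A: "A \<in> ends y"
  then obtain x where x: "x \<in> carrier G" "A = H #> x" using ends_two[OF y] gc y by blast
  have "y \<otimes> inv x \<in> M <#> H" using inc_elem[OF M x(1) y] A x by simp
  thus "(A, M #> y) \<in> ginc (coset_graph G H M)"
    unfolding ginc_def coset_graph_def using x y by auto
qed

lemma rcosets_eq: "rcosets M = {M #> y | y. y \<in> carrier G}"
  unfolding RCOSETS_def by auto

lemma gv: "gverts (coset_graph G H M) = rcosets H" unfolding gverts_def coset_graph_def by simp
lemma ge: "gedges (coset_graph G H M) = rcosets M" unfolding gedges_def coset_graph_def by simp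

lemma two_eq: "u \<in> {a, b} \<Longrightarrow> v \<in> {a, b} \<Longrightarrow> u \<noteq> v \<Longrightarrow> {a, b} = {u, v}"
  by auto

lemma adj:
  assumes M: "subgroup M G" "g \<in> M" "M \<subseteq> Stab"
  shows "gadjacent (coset_graph G H M) u v \<longleftrightarrow> u \<noteq> v \<and> (\<exists>y\<in>carrier G. ends y = {u, v})"
proof
  assume "gadjacent (coset_graph G H M) u v"
  then obtain e where uv: "u \<noteq> v" "e \<in> rcosets M" "(u, e) \<in> ginc (coset_graph G H M)"
     "(v, e) \<in> ginc (coset_graph G H M)" unfolding gadjacent_def gv ge by auto
  then obtain y where y: "y \<in> carrier G" "e = M #> y" unfolding rcosets_eq by auto
  have "u \<in> ends y" "v \<in> ends y" using uv inc_graph[OF M y(1)] y(2) by auto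
  hence "ends y = {u, v}" using two_eq uv(1) unfolding ends_def by auto
  thus "u \<noteq> v \<and> (\<exists>y\<in>carrier G. ends y = {u, v})" using uv(1) y(1) by auto
next
  assume "u \<noteq> v \<and> (\<exists>y\<in>carrier G. ends y = {u, v})"
  then obtain y where y: "u \<noteq> v" "y \<in> carrier G" "ends y = {u, v}" by auto
  have "u \<in> rcosets H" "v \<in> rcosets H" using ends_sub[OF y(2)] y(3) by auto
  moreover have "M #> y \<in> rcosets M" unfolding rcosets_eq using y(2) by auto
  moreover have "(u, M #> y) \<in> ginc (coset_graph G H M)" "(v, M #> y) \<in> ginc (coset_graph G H M)"
    using inc_graph[OF M y(2)] y(3) by auto
  ultimately show "gadjacent (coset_graph G H M) u v" unfolding gadjacent_def gv ge using y(1) by blast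
qed

lemma shift_inv: "B \<subseteq> carrier G \<Longrightarrow> y \<in> carrier G \<Longrightarrow> (B #> y) #> inv y = B"
  by (simp add: coset_mult_assoc r_coset_subset_G)

lemma common:
  assumes M: "subgroup M G" "g \<in> M" "M \<subseteq> Stab" and y0: "y0 \<in> carrier G"
    and uv: "ends y0 = {u, v}" "u \<noteq> v"
  shows "card {e \<in> gedges (coset_graph G H M). (u, e) \<in> ginc (coset_graph G H M) \<and> (v, e) \<in> ginc (coset_graph G H M)}
     = card {M #> z | z. z \<in> Stab}"
proof -
  let ?C = "{e \<in> gedges (coset_graph G H M). (u, e) \<in> ginc (coset_graph G H M) \<and> (v, e) \<in> ginc (coset_graph G H M)}"
  let ?R = "{M #> z | z. z \<in> Stab}"
  have MG: "M \<subseteq> carrier G" by (rule subgroup.subset[OF M(1)])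
  have "?C = (\<lambda>B. B #> y0) ` ?R"
  proof
    show "?C \<subseteq> (\<lambda>B. B #> y0) ` ?R"
    proof
      fix e assume e: "e \<in> ?C"
      then obtain y where y: "y \<in> carrier G" "e = M #> y" unfolding ge rcosets_eq by auto
      have "u \<in> ends y" "v \<in> ends y" using e inc_graph[OF M y(1)] y(2) by auto
      hence "ends y = {u, v}" using two_eq uv(2) unfolding ends_def by auto
      hence "y \<otimes> inv y0 \<in> Stab" using ends_eq[OF y0 y(1)] uv by simp
      moreover have "e = (M #> (y \<otimes> inv y0)) #> y0" using y y0 MG by (simp add: coset_mult_assoc m_assoc)
      ultimately show "e \<in> (\<lambda>B. B #> y0) ` ?R" by blast
    qed
    show "(\<lambda>B. B #> y0) ` ?R \<subseteq> ?C"
    proof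
      fix e assume "e \<in> (\<lambda>B. B #> y0) ` ?R"
      then obtain z where z: "z \<in> Stab" "e = (M #> z) #> y0" by auto
      have zc: "z \<in> carrier G" using z Stab_sub by auto
      have e2: "e = M #> (z \<otimes> y0)" using z(2) zc y0 MG by (simp add: coset_mult_assoc)
      have "ends (z \<otimes> y0) = ends y0" using ends_eq[OF y0 m_closed[OF zc y0]] z zc y0 by (simp add: m_assoc)
      hence "(u, e) \<in> ginc (coset_graph G H M)" "(v, e) \<in> ginc (coset_graph G H M)"
        using inc_graph[OF M m_closed[OF zc y0]] e2 uv by auto
      moreover have "e \<in> gedges (coset_graph G H M)" unfolding ge rcosets_eq e2 using zc y0 by auto
      ultimately show "e \<in> ?C" by blast
    qed
  qed
  moreover have "inj_on (\<lambda>B. B #> y0) ?R"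
  proof (rule inj_onI)
    fix A B assume A: "A \<in> ?R" and B: "B \<in> ?R" and e: "A #> y0 = B #> y0"
    obtain a b where ab: "a \<in> Stab" "A = M #> a" "b \<in> Stab" "B = M #> b" using A B by auto
    have "A \<subseteq> carrier G" "B \<subseteq> carrier G" unfolding ab(2,4)
      using r_coset_subset_G[OF MG] ab(1,3) Stab_sub by auto
    thus "A = B" using shift_inv[of A y0] shift_inv[of B y0] e y0 by metis
  qed
  ultimately show ?thesis by (simp add: card_image)
qed

lemma mult:
  assumes M: "subgroup M G" "g \<in> M" "M \<subseteq> Stab"
  shows "edge_multiplicity (coset_graph G H M) (card {M #> z | z. z \<in> Stab})"
  unfolding edge_multiplicity_def
proof (intro allI impI)
  fix u v assume "gadjacent (coset_graph G H M) u v"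
  then obtain y where y: "u \<noteq> v" "y \<in> carrier G" "ends y = {u, v}" using adj[OF M] by auto
  show "card {e \<in> gedges (coset_graph G H M). (u, e) \<in> ginc (coset_graph G H M) \<and> (v, e) \<in> ginc (coset_graph G H M)}
     = card {M #> z | z. z \<in> Stab}" by (rule common[OF M y(2) y(3) y(1)])
qed

definition Ends :: "'a set set set" where "Ends = {ends y | y. y \<in> carrier G}"

lemma base:
  assumes M: "subgroup M G" "g \<in> M" "M \<subseteq> Stab"
  shows "base_graph (coset_graph G H M) = (rcosets H, Ends, {(x, e). x \<in> rcosets H \<and> e \<in> Ends \<and> x \<in> e})"
proof -
  have "{{u, v} | u v. gadjacent (coset_graph G H M) u v} = Ends"
  proof
    show "{{u, v} | u v. gadjacent (coset_graph G H M) u v} \<subseteq> Ends"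
      unfolding Ends_def using adj[OF M] by fastforce
    show "Ends \<subseteq> {{u, v} | u v. gadjacent (coset_graph G H M) u v}"
    proof
      fix E assume "E \<in> Ends"
      then obtain y where y: "y \<in> carrier G" "E = ends y" unfolding Ends_def by auto
      have "gadjacent (coset_graph G H M) (H #> y) (H #> (g \<otimes> y))"
        using adj[OF M] ends_ne[OF y(1)] y(1) unfolding ends_def by blast
      thus "E \<in> {{u, v} | u v. gadjacent (coset_graph G H M) u v}" unfolding y(2) ends_def by blast
    qed
  qed
  thus ?thesis unfolding base_graph_def gv Let_def by simp
qed

lemma simpc:
  "simp_coset_graph G H ((H #> g) <#> H) = (rcosets H, Ends, {(x, e). x \<in> rcosets H \<and> e \<in> Ends \<and> x \<in> e})"
proof -
  have "{{H #> x, H #> y} | x y. x \<in> carrier G \<and> y \<in> carrier G \<and> y \<otimes> inv x \<in> (H #> g) <#> H} = Ends"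
  proof
    show "{{H #> x, H #> y} | x y. x \<in> carrier G \<and> y \<in> carrier G \<and> y \<otimes> inv x \<in> (H #> g) <#> H} \<subseteq> Ends"
    proof
      fix E assume "E \<in> {{H #> x, H #> y} | x y. x \<in> carrier G \<and> y \<in> carrier G \<and> y \<otimes> inv x \<in> (H #> g) <#> H}"
      then obtain x y where xy: "E = {H #> x, H #> y}" "x \<in> carrier G" "y \<in> carrier G"
        "y \<otimes> inv x \<in> (H #> g) <#> H" by blast
      then obtain h1 h2 where h: "h1 \<in> H" "h2 \<in> H" "y \<otimes> inv x = (h1 \<otimes> g) \<otimes> h2"
        unfolding set_mult_def r_coset_def by auto
      have h1c: "h1 \<in> carrier G" and h2c: "h2 \<in> carrier G" using h HG by auto
      let ?z = "h2 \<otimes> x"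
      have zc: "?z \<in> carrier G" using h2c xy by simp
      have "y = (y \<otimes> inv x) \<otimes> x" using xy by (simp add: m_assoc)
      hence ye: "y = h1 \<otimes> (g \<otimes> ?z)" unfolding h(3) using h1c h2c gc xy by (simp add: m_assoc)
      have "H #> ?z = (H #> h2) #> x" using coset_mult_assoc[OF HG h2c xy(2)] by simp
      also have "\<dots> = H #> x" using coset_join2[OF h2c H h(2)] by simp
      finally have e1: "H #> ?z = H #> x" .
      have "H #> y = (H #> h1) #> (g \<otimes> ?z)" unfolding ye using coset_mult_assoc[OF HG h1c m_closed[OF gc zc]] by simp
      also have "\<dots> = H #> (g \<otimes> ?z)" using coset_join2[OF h1c H h(1)] by simp
      finally have e2: "H #> y = H #> (g \<otimes> ?z)" .
      have "E = ends ?z" unfolding xy(1) ends_def e1 e2 ..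
      thus "E \<in> Ends" unfolding Ends_def using zc by blast
    qed
    show "Ends \<subseteq> {{H #> x, H #> y} | x y. x \<in> carrier G \<and> y \<in> carrier G \<and> y \<otimes> inv x \<in> (H #> g) <#> H}"
    proof
      fix E assume "E \<in> Ends"
      then obtain y where y: "y \<in> carrier G" "E = ends y" unfolding Ends_def by auto
      have "g = (\<one> \<otimes> g) \<otimes> \<one>" using gc by simp
      hence "g \<in> (H #> g) <#> H" unfolding set_mult_def r_coset_def
        using subgroup.one_closed[OF H] by blast
      moreover have "(g \<otimes> y) \<otimes> inv y = g" using y gc by (simp add: m_assoc)
      ultimately have "(g \<otimes> y) \<otimes> inv y \<in> (H #> g) <#> H" by simp
      thus "E \<in> {{H #> x, H #> y} | x y. x \<in> carrier G \<and> y \<in> carrier G \<and> y \<otimes> inv x \<in> (H #> g) <#> H}"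
        unfolding y(2) ends_def using y gc by blast
    qed
  qed
  thus ?thesis unfolding simp_coset_graph_def Let_def by simp
qed

lemma theta:
  assumes y: "y \<in> carrier G"
  shows "ends (SOME y'. y' \<in> carrier G \<and> Stab #> y = Stab #> y') = ends y"
proof -
  have "\<exists>y'. y' \<in> carrier G \<and> Stab #> y = Stab #> y'" using y by blast
  hence "(SOME y'. y' \<in> carrier G \<and> Stab #> y = Stab #> y') \<in> carrier G \<and>
     Stab #> y = Stab #> (SOME y'. y' \<in> carrier G \<and> Stab #> y = Stab #> y')" by (rule someI_ex)
  thus ?thesis using ends_rcos[OF subset_refl Stab_subgroup y] by metis
qed

lemma iso:
  "graph_iso (coset_graph G H Stab) (rcosets H, Ends, {(x, e). x \<in> rcosets H \<and> e \<in> Ends \<and> x \<in> e})"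
proof -
  let ?t = "\<lambda>B. ends (SOME y'. y' \<in> carrier G \<and> B = Stab #> y')"
  have M: "subgroup Stab G" "g \<in> Stab" "Stab \<subseteq> Stab" by (simp_all add: Stab_subgroup g_Stab)
  have b1: "bij_betw id (gverts (coset_graph G H Stab)) (rcosets H)" unfolding gv by simp
  have b2: "bij_betw ?t (rcosets Stab) Ends"
    unfolding bij_betw_def
  proof
    show "inj_on ?t (rcosets Stab)"
    proof (rule inj_onI)
      fix A B assume A: "A \<in> rcosets Stab" and B: "B \<in> rcosets Stab" and e: "?t A = ?t B"
      obtain a b where ab: "a \<in> carrier G" "A = Stab #> a" "b \<in> carrier G" "B = Stab #> b"
        using A B unfolding rcosets_eq by auto
      have "ends a = ends b" using e theta[OF ab(1)] theta[OF ab(3)] unfolding ab(2,4) by simp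
      hence "b \<otimes> inv a \<in> Stab" using ends_eq[OF ab(1) ab(3)] by simp
      hence "Stab #> b = Stab #> a" using rcos_eq[OF Stab_subgroup ab(3) ab(1)] by simp
      thus "A = B" using ab by simp
    qed
    show "?t ` (rcosets Stab) = Ends"
    proof
      show "?t ` (rcosets Stab) \<subseteq> Ends" unfolding rcosets_eq Ends_def using theta by fastforce
      show "Ends \<subseteq> ?t ` (rcosets Stab)"
      proof
        fix E assume "E \<in> Ends"
        then obtain y where y: "y \<in> carrier G" "E = ends y" unfolding Ends_def by auto
        hence "E = ?t (Stab #> y)" using theta[OF y(1)] by simp
        moreover have "Stab #> y \<in> rcosets Stab" unfolding rcosets_eq using y by auto
        ultimately show "E \<in> ?t ` (rcosets Stab)" by blast
      qed
    qed
  qed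
  have i: "\<forall>v\<in>gverts (coset_graph G H Stab). \<forall>e\<in>gedges (coset_graph G H Stab).
      (v, e) \<in> ginc (coset_graph G H Stab) \<longleftrightarrow> (id v, ?t e) \<in> {(x, e). x \<in> rcosets H \<and> e \<in> Ends \<and> x \<in> e}"
  proof (intro ballI)
    fix v e assume v: "v \<in> gverts (coset_graph G H Stab)" and e: "e \<in> gedges (coset_graph G H Stab)"
    obtain y where y: "y \<in> carrier G" "e = Stab #> y" using e unfolding ge rcosets_eq by auto
    have "?t e = ends y" using theta[OF y(1)] y(2) by simp
    moreover have "ends y \<in> Ends" unfolding Ends_def using y by auto
    ultimately show "(v, e) \<in> ginc (coset_graph G H Stab) \<longleftrightarrow> (id v, ?t e) \<in> {(x, e). x \<in> rcosets H \<and> e \<in> Ends \<and> x \<in> e}"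
      using inc_graph[OF M y(1)] y(2) v unfolding gv by auto
  qed
  show ?thesis unfolding graph_iso_def gedges_def[of "(rcosets H, Ends, _)"] gverts_def[of "(rcosets H, Ends, _)"]
      ginc_def[of "(rcosets H, Ends, _)"]
    using b1 b2[folded ge[of Stab]] i by (simp only: fst_conv snd_conv) blast
qed

lemma card_one: "card {J #> z | z. z \<in> Stab} = 1 \<longleftrightarrow> J = Stab"
proof
  assume c: "card {J #> z | z. z \<in> Stab} = 1"
  then obtain X where X: "{J #> z | z. z \<in> Stab} = {X}" using card_1_singletonE by blast
  have "J #> \<one> = J" using JG by simp
  hence "J \<in> {J #> z | z. z \<in> Stab}" using subgroup.one_closed[OF Stab_subgroup] by (metis (mono_tags, lifting) CollectI)
  hence XJ: "X = J" using X by simp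
  show "J = Stab"
  proof
    show "J \<subseteq> Stab" by (rule J_Stab)
    show "Stab \<subseteq> J"
    proof
      fix z assume z: "z \<in> Stab"
      hence "J #> z \<in> {J #> z | z. z \<in> Stab}" by blast
      hence "J #> z = J" using X XJ by simp
      thus "z \<in> J" using coset_join1[OF _ _ J] z Stab_sub by auto
    qed
  qed
next
  assume e: "J = Stab"
  have "{J #> z | z. z \<in> Stab} = {Stab}"
    using subgroup.rcos_const[OF Stab_subgroup is_group] subgroup.one_closed[OF Stab_subgroup] unfolding e by auto
  thus "card {J #> z | z. z \<in> Stab} = 1" by simp
qed

end

theorem theorem1p2:
  fixes G :: "('a, 'b) monoid_scheme" and H J L :: "'a set" and g :: 'a
  assumes "group G" and "subgroup H G" and "subgroup J G"
    and "H \<noteq> carrier G"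
    and "sindex G J (H \<inter> J) = 2"
    and "finite (rcosets\<^bsub>G\<lparr>carrier := H\<rparr>\<^esub> (H \<inter> J))"
    and "core_free G (H \<inter> J)"
    and "g \<in> J - (H \<inter> J)"
    and "L = (H \<inter> conj_set G H g) <#>\<^bsub>G\<^esub> generate G {g}"
  shows "subgroup L G \<and> J \<subseteq> L
    \<and> edge_multiplicity (coset_graph G H J) (sindex G L J)
    \<and> graph_iso (base_graph (coset_graph G H J)) (coset_graph G H L)
    \<and> graph_iso (coset_graph G H L) (simp_coset_graph G H ((H #>\<^bsub>G\<^esub> g) <#>\<^bsub>G\<^esub> H))
    \<and> (simple_graph (coset_graph G H J) \<longleftrightarrow> J = L)
    \<and> (J = L \<longrightarrow> graph_iso (coset_graph G H J) (simp_coset_graph G H ((H #>\<^bsub>G\<^esub> g) <#>\<^bsub>G\<^esub> H)))"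
proof -
  have gJ: "g \<in> J" and gnH: "g \<notin> H" using assms(8) by auto
  interpret S: setting G H J g
    by (rule setting.intro[OF assms(1)], rule setting_axioms.intro[OF assms(2) assms(3) assms(5) gJ gnH])
  have LS: "L = S.Stab" using S.L_Stab assms(9) by simp
  have si: "sindex G L J = card {J #>\<^bsub>G\<^esub> z | z. z \<in> S.Stab}" unfolding sindex_def rcosets_sub LS ..
  have MJ: "subgroup J G" "g \<in> J" "J \<subseteq> S.Stab" using assms(3) gJ S.J_Stab by auto
  have MS: "subgroup S.Stab G" "g \<in> S.Stab" "S.Stab \<subseteq> S.Stab" using S.Stab_subgroup S.g_Stab by auto
  have i1: "graph_iso (coset_graph G H L) (simp_coset_graph G H ((H #>\<^bsub>G\<^esub> g) <#>\<^bsub>G\<^esub> H))"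
    unfolding LS S.simpc by (rule S.iso)
  have i2: "graph_iso (base_graph (coset_graph G H J)) (coset_graph G H L)"
    unfolding LS S.base[OF MJ] by (rule graph_iso_sym[OF S.iso])
  have em: "edge_multiplicity (coset_graph G H J) (sindex G L J)" unfolding si by (rule S.mult[OF MJ])
  have simp: "simple_graph (coset_graph G H J) \<longleftrightarrow> J = L"
  proof
    assume "simple_graph (coset_graph G H J)"
    hence e1: "edge_multiplicity (coset_graph G H J) 1" unfolding simple_graph_def .
    let ?u = "H #>\<^bsub>G\<^esub> \<one>\<^bsub>G\<^esub>" and ?v = "H #>\<^bsub>G\<^esub> (g \<otimes>\<^bsub>G\<^esub> \<one>\<^bsub>G\<^esub>)"
    have ne: "?u \<noteq> ?v" by (rule S.ends_ne[OF S.one_closed])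
    have en: "S.ends \<one>\<^bsub>G\<^esub> = {?u, ?v}" unfolding S.ends_def ..
    have "gadjacent (coset_graph G H J) ?u ?v" using S.adj[OF MJ] ne en S.one_closed by blast
    hence "card {e \<in> gedges (coset_graph G H J). (?u, e) \<in> ginc (coset_graph G H J) \<and> (?v, e) \<in> ginc (coset_graph G H J)} = 1"
      using e1 unfolding edge_multiplicity_def by blast
    hence "card {J #>\<^bsub>G\<^esub> z | z. z \<in> S.Stab} = 1" using S.common[OF MJ S.one_closed en ne] by simp
    thus "J = L" using S.card_one LS by simp
  next
    assume "J = L"
    hence "card {J #>\<^bsub>G\<^esub> z | z. z \<in> S.Stab} = 1" using S.card_one LS by simp
    thus "simple_graph (coset_graph G H J)" unfolding simple_graph_def using S.mult[OF MJ] by simp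
  qed
  show ?thesis using LS S.Stab_subgroup S.J_Stab em i1 i2 simp by auto
qed

end
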